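(* For every integer $k \geq 2$ there is a constant $\alpha_k$ with $2k-1 < \alpha_k < 2k - \tfrac{1}{2}$ such that the number of palstars of length $2n$ over a $k$-letter alphabet is $\Theta(\alpha_k^n)$ as $n \to \infty$.
   Context: Let $\Sigma_k$ be an alphabet with $k$ letters and let $P = \{ x x^R : x \in \Sigma_k^+\}$ be the set of nonempty even-length palindromes over $\Sigma_k$ (here $x^R$ is the reversal of $x$). A palstar is an element of $P^* = \bigcup_{i\ge 0} P^i$, i.e. a (possibly empty) concatenation of nonempty even-length palindromes. *)

theory Defs
  imports Main "HOL-Library.Landau_Symbols"
begin

definition even_pal :: "'a list \<Rightarrow> bool" where
  "even_pal p \<longleftrightarrow> (\<exists>x. x \<noteq> [] \<and> p = x @ rev x)"

definition palstar :: "'a list \<Rightarrow> bool" where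
  "palstar w \<longleftrightarrow> (\<exists>ps. (\<forall>p\<in>set ps. even_pal p) \<and> w = concat ps)"

definition palstar_count :: "nat \<Rightarrow> nat \<Rightarrow> nat" where
  "palstar_count k n = card {w :: nat list. length w = 2 * n \<and> set w \<subseteq> {..<k} \<and> palstar w}"

end

theory Submission
  imports Defs Complex_Main
begin


lemma even_pal_char: "even_pal w \<longleftrightarrow> w \<noteq> [] \<and> even (length w) \<and> rev w = w"
proof
  assume "even_pal w" then show "w \<noteq> [] \<and> even (length w) \<and> rev w = w"
    unfolding even_pal_def by auto
next
  assume h: "w \<noteq> [] \<and> even (length w) \<and> rev w = w"
  define h2 where "h2 = length w div 2"
  have lw: "length w = 2*h2" using h h2_def by auto
  have "drop h2 w = drop h2 (rev w)" using h by simp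
  also have "\<dots> = rev (take h2 w)" by (simp add: drop_rev lw)
  finally have "w = take h2 w @ rev (take h2 w)" by (metis append_take_drop_id)
  moreover have "take h2 w \<noteq> []" using h lw by (cases h2) auto
  ultimately show "even_pal w" unfolding even_pal_def by blast
qed

lemma palstar_nil: "palstar []" unfolding palstar_def by (rule exI[of _ "[]"]) simp

lemma palstar_single: "even_pal p \<Longrightarrow> palstar p"
  unfolding palstar_def by (rule exI[of _ "[p]"]) simp

lemma palstar_append: "palstar a \<Longrightarrow> palstar b \<Longrightarrow> palstar (a @ b)"
  unfolding palstar_def by (metis Un_iff concat_append set_append)

lemma palstar_even: "palstar w \<Longrightarrow> even (length w)"
proof -
  have "\<forall>w. (\<forall>p\<in>set ps. even_pal p) \<longrightarrow> w = concat ps \<longrightarrow> even (length w)" for ps :: "'a list list"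
    by (induction ps) (auto simp: even_pal_char)
  then show "palstar w \<Longrightarrow> even (length w)" unfolding palstar_def by blast
qed

definition minpal :: "'a list \<Rightarrow> bool" where
  "minpal v \<longleftrightarrow> even_pal v \<and> (\<forall>u z. v = u @ z \<and> z \<noteq> [] \<longrightarrow> \<not> even_pal u)"

lemma pal_nth: "rev w = w \<Longrightarrow> i < length w \<Longrightarrow> w ! i = w ! (length w - Suc i)"
  by (metis rev_nth)

lemma half:
  assumes p: "even_pal p" and u: "minpal u" and pz: "p = u @ z" and z: "z \<noteq> []"
  shows "length u \<le> length z"
proof (rule ccontr)
  assume "\<not> length u \<le> length z"
  hence lt: "length z < length u" by simp
  have eu: "even_pal u" using u minpal_def by blast
  have "even (length u)" using eu even_pal_char by blast
  then obtain a where a: "length u = 2*a" by (auto elim: evenE)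
  have "even (length p)" using p even_pal_char by blast
  then obtain m where m: "length p = 2*m" by (auto elim: evenE)
  have lz: "length z > 0" using z by simp
  have e: "2*a + length z = 2*m" using a m pz by simp
  have am: "a < m" "m < 2*a" using e lz lt a by linarith+
  define L where "L = 4*a - 2*m"
  have L: "0 < L" "L < 2*a" "even L" using am L_def by auto
  have rp: "rev p = p" and ru: "rev u = u" using p eu even_pal_char by auto
  have pu: "\<And>i. i < 2*a \<Longrightarrow> p ! i = u ! i" using pz a by (simp add: nth_append del: rev_is_rev_conv)
  have upal: "u ! i = u ! (2*a - Suc i)" if "i < 2*a" for i using pal_nth[OF ru, of i] a that by simp
  have ppal: "p ! i = p ! (2*m - Suc i)" if "i < 2*m" for i using pal_nth[OF rp, of i] m that by simp
  define w where "w = take L u"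
  have lw: "length w = L" using w_def L a by simp
  have "rev w = w"
  proof (rule nth_equalityI)
    show "length (rev w) = length w" by simp
    fix i assume "i < length (rev w)"
    hence i: "i < L" using lw by simp
    have e1: "2*a - Suc (L - Suc i) = 2*m - 2*a + i" using am i L unfolding L_def by arith
    have e2: "2*m - Suc (2*m - 2*a + i) = 2*a - Suc i" using am i L unfolding L_def by arith
    have l1: "L - Suc i < 2*a" using L by arith
    have l2: "2*m - 2*a + i < 2*a" using am i L unfolding L_def by arith
    have l3: "2*m - 2*a + i < 2*m" using am i L unfolding L_def by arith
    have l4: "2*a - Suc i < 2*a" using am i L by arith
    have l5: "i < 2*a" using i L by arith
    have "rev w ! i = w ! (L - Suc i)" using i lw by (simp add: rev_nth)
    also have "\<dots> = u ! (L - Suc i)" using i w_def by simp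
    also have "u ! (L - Suc i) = u ! (2*m - 2*a + i)"
      using upal[OF l1] e1 by simp
    also have "\<dots> = p ! (2*m - 2*a + i)" using pu[OF l2] by simp
    also have "\<dots> = p ! (2*a - Suc i)" using ppal[OF l3] e2 by simp
    also have "\<dots> = u ! (2*a - Suc i)" using pu[OF l4] by simp
    also have "\<dots> = u ! i" using upal[OF l5] by simp
    also have "\<dots> = w ! i" using i w_def by simp
    finally show "rev w ! i = w ! i" .
  qed
  moreover have "w \<noteq> []" using lw L by auto
  ultimately have "even_pal w" using even_pal_char lw L by blast
  moreover have "u = w @ drop L u" "drop L u \<noteq> []" using w_def L a by auto
  ultimately show False using u minpal_def by blast
qed

lemma mirror:
  assumes rp: "rev p = p" and ru: "rev u = u" and pz: "p = u @ z" and l: "length u \<le> length z"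
  shows "\<exists>m. z = m @ u \<and> rev m = m"
proof -
  have "rev z @ u = u @ z" using rp ru pz by simp
  hence "drop (length z) (rev z @ u) = drop (length z) (u @ z)" by simp
  hence d: "u = drop (length z - length u) z" using l by simp
  define m where "m = take (length z - length u) z"
  have zm: "z = m @ u" using d m_def by (metis append_take_drop_id)
  have "rev p = u @ rev m @ u" using pz zm ru by simp
  hence "u @ rev m @ u = u @ m @ u" using rp pz zm by simp
  hence "rev m = m" by simp
  thus ?thesis using zm by blast
qed

lemma decomp:
  "even_pal p \<Longrightarrow> \<exists>u z. p = u @ z \<and> minpal u \<and> (z = [] \<or> (\<exists>m. z = m @ u \<and> (m = [] \<or> even_pal m)))"
proof (induction "length p" arbitrary: p rule: less_induct)
  case less
  show ?case
  proof (cases "minpal p")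
    case True thus ?thesis by (intro exI[of _ p] exI[of _ "[]"]) simp
  next
    case False
    then obtain u1 z1 where 1: "p = u1 @ z1" "z1 \<noteq> []" "even_pal u1"
      using less.prems minpal_def by blast
    have "length u1 < length p" using 1 by simp
    then obtain u z2 where 2: "u1 = u @ z2" "minpal u" using less.hyps 1 by blast
    define z where "z = z2 @ z1"
    have pz: "p = u @ z" "z \<noteq> []" using 1 2 z_def by auto
    have l: "length u \<le> length z" using half[OF less.prems 2(2) pz] .
    have ru: "rev u = u" using 2 minpal_def even_pal_char by blast
    have rp: "rev p = p" using less.prems even_pal_char by blast
    obtain m where m: "z = m @ u" "rev m = m" using mirror[OF rp ru pz(1) l] by blast
    have "even (length m)"
    proof -
      have "even (length p)" "even (length u)" using less.prems 2 minpal_def even_pal_char by blast+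
      thus ?thesis using pz m by simp
    qed
    hence "m = [] \<or> even_pal m" using m even_pal_char by blast
    thus ?thesis using pz m 2 by blast
  qed
qed

lemma palstar_decomp:
  assumes "palstar w" "w \<noteq> []"
  shows "\<exists>v y. w = v @ y \<and> minpal v \<and> palstar y"
proof -
  obtain ps where ps: "\<forall>p\<in>set ps. even_pal p" "w = concat ps" using assms palstar_def by blast
  then obtain p rest where pr: "ps = p # rest" using assms by (cases ps) auto
  have ep: "even_pal p" and pre: "palstar (concat rest)"
    using ps pr palstar_def by auto
  obtain u z where uz: "p = u @ z" "minpal u" "z = [] \<or> (\<exists>m. z = m @ u \<and> (m = [] \<or> even_pal m))"
    using decomp[OF ep] by blast
  have eu: "even_pal u" using uz minpal_def by blast
  have "palstar z"
    using uz(3) palstar_nil palstar_append palstar_single[OF eu] palstar_single by fastforce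
  hence "palstar (z @ concat rest)" using pre palstar_append by blast
  thus ?thesis using uz ps pr by (intro exI[of _ u] exI[of _ "z @ concat rest"]) auto
qed

lemma minpal_unique:
  assumes "minpal v" "minpal v'" "v @ y = v' @ y'"
  shows "v = v'"
proof -
  from assms(3) obtain us where "v = v' @ us \<and> us @ y = y' \<or> v @ us = v' \<and> y = us @ y'"
    by (auto simp: append_eq_append_conv2)
  thus ?thesis using assms(1,2) unfolding minpal_def by (metis append.right_neutral)
qed


definition PS :: "nat \<Rightarrow> nat \<Rightarrow> nat list set" where
  "PS k n = {w. length w = 2*n \<and> set w \<subseteq> {..<k} \<and> palstar w}"
definition MP :: "nat \<Rightarrow> nat \<Rightarrow> nat list set" where
  "MP k j = {v. length v = 2*j \<and> set v \<subseteq> {..<k} \<and> minpal v}"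

lemma palstar_count_PS: "palstar_count k n = card (PS k n)"
  unfolding palstar_count_def PS_def ..

lemma finite_len: "finite {w :: nat list. length w = n \<and> set w \<subseteq> {..<k}}"
proof -
  have "{w :: nat list. length w = n \<and> set w \<subseteq> {..<k}} = {xs. set xs \<subseteq> {..<k} \<and> length xs = n}" by auto
  thus ?thesis using finite_lists_length_eq[of "{..<k}" n] by simp
qed

lemma card_len: "card {w :: nat list. length w = n \<and> set w \<subseteq> {..<k}} = k ^ n"
proof -
  have "{w :: nat list. length w = n \<and> set w \<subseteq> {..<k}} = {xs. set xs \<subseteq> {..<k} \<and> length xs = n}" by auto
  thus ?thesis using card_lists_length_eq[of "{..<k}" n] by simp
qed

lemma finite_PS: "finite (PS k n)"
  by (rule finite_subset[OF _ finite_len[of "2*n" k]]) (auto simp: PS_def)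
lemma finite_MP: "finite (MP k n)"
  by (rule finite_subset[OF _ finite_len[of "2*n" k]]) (auto simp: MP_def)

lemma renewal:
  assumes n: "1 \<le> n"
  shows "card (PS k n) = (\<Sum>j\<in>{1..n}. card (MP k j) * card (PS k (n-j)))"
proof -
  let ?f = "\<lambda>(v::nat list, y). v @ y"
  have eq: "PS k n = (\<Union>j\<in>{1..n}. ?f ` (MP k j \<times> PS k (n-j)))"
  proof
    show "PS k n \<subseteq> (\<Union>j\<in>{1..n}. ?f ` (MP k j \<times> PS k (n-j)))"
    proof
      fix w assume w: "w \<in> PS k n"
      hence "w \<noteq> []" "palstar w" using n by (auto simp: PS_def)
      then obtain v y where vy: "w = v @ y" "minpal v" "palstar y" using palstar_decomp by blast
      have "even (length v)" "v \<noteq> []" using vy minpal_def even_pal_char by blast+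
      then obtain j where j: "length v = 2*j" "1 \<le> j" by (auto elim!: evenE) (metis Suc_leI bot_nat_0.not_eq_extremum length_0_conv mult_0_right)
      have lw: "length w = 2*n" "set w \<subseteq> {..<k}" using w by (auto simp: PS_def)
      have jn: "j \<le> n" using lw vy j by simp
      have "v \<in> MP k j" using vy j lw by (auto simp: MP_def)
      moreover have "y \<in> PS k (n-j)" using vy j lw jn by (auto simp: PS_def)
      ultimately show "w \<in> (\<Union>j\<in>{1..n}. ?f ` (MP k j \<times> PS k (n-j)))"
        using vy j jn by force
    qed
  next
    show "(\<Union>j\<in>{1..n}. ?f ` (MP k j \<times> PS k (n-j))) \<subseteq> PS k n"
    proof clarify
      fix j v y assume "j \<in> {1..n}" "v \<in> MP k j" "y \<in> PS k (n-j)"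
      moreover have "minpal v \<Longrightarrow> palstar v" using minpal_def palstar_single by blast
      ultimately show "v @ y \<in> PS k n" by (auto simp: MP_def PS_def palstar_append)
    qed
  qed
  have inj: "inj_on ?f (MP k j \<times> PS k (n-j))" for j
    by (rule inj_onI) (auto simp: MP_def dest: minpal_unique)
  have "card (PS k n) = (\<Sum>j\<in>{1..n}. card (?f ` (MP k j \<times> PS k (n-j))))"
    unfolding eq
  proof (rule card_UN_disjoint)
    show "finite {1..n}" by simp
    show "\<forall>i::nat\<in>{1..n}. finite (?f ` (MP k i \<times> PS k (n-i)))" using finite_MP finite_PS by blast
    show "\<forall>i::nat\<in>{1..n}. \<forall>j\<in>{1..n}. i \<noteq> j \<longrightarrow> ?f ` (MP k i \<times> PS k (n-i)) \<inter> ?f ` (MP k j \<times> PS k (n-j)) = {}"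
    proof (intro ballI impI)
      fix i j :: nat assume "i \<noteq> j"
      show "?f ` (MP k i \<times> PS k (n-i)) \<inter> ?f ` (MP k j \<times> PS k (n-j)) = {}"
      proof (rule ccontr)
        assume "?f ` (MP k i \<times> PS k (n-i)) \<inter> ?f ` (MP k j \<times> PS k (n-j)) \<noteq> {}"
        then obtain v y v' y' where "v \<in> MP k i" "v' \<in> MP k j" "v @ y = v' @ y'" by auto
        hence "v = v'" "length v = 2*i" "length v' = 2*j" using minpal_unique by (auto simp: MP_def)
        thus False using \<open>i \<noteq> j\<close> by simp
      qed
    qed
  qed
  also have "\<dots> = (\<Sum>j\<in>{1..n}. card (MP k j) * card (PS k (n-j)))"
    by (rule sum.cong) (simp_all add: card_image[OF inj] card_cartesian_product)
  finally show ?thesis .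
qed

lemma PS_pos: "0 < k \<Longrightarrow> 1 \<le> card (PS k n)"
proof -
  assume k: "0 < k"
  have "palstar (concat (replicate n [0::nat,0]))"
    unfolding palstar_def by (rule exI[of _ "replicate n [0,0]"]) (auto simp: even_pal_def intro: exI[of _ "[0]"])
  hence "concat (replicate n [0::nat,0]) \<in> PS k n" using k by (auto simp: PS_def length_concat sum_list_replicate)
  hence "PS k n \<noteq> {}" by blast
  thus ?thesis using finite_PS by (simp add: Suc_le_eq card_gt_0_iff)
qed



definition HH :: "nat \<Rightarrow> nat \<Rightarrow> nat list set" where
  "HH k j = {x. length x = j \<and> set x \<subseteq> {..<k} \<and> minpal (x @ rev x)}"

lemma card_MP: "card (MP k j) = card (HH k j)"
proof -
  have "MP k j = (\<lambda>x. x @ rev x) ` HH k j"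
  proof
    show "MP k j \<subseteq> (\<lambda>x. x @ rev x) ` HH k j"
    proof
      fix v assume v: "v \<in> MP k j"
      have "even_pal v" using v minpal_def by (auto simp: MP_def)
      then obtain x where x: "v = x @ rev x" unfolding even_pal_def by blast
      have "length x = j" "set x \<subseteq> {..<k}" using v x by (auto simp: MP_def)
      thus "v \<in> (\<lambda>x. x @ rev x) ` HH k j" using x v by (auto simp: MP_def HH_def)
    qed
  next
    show "(\<lambda>x. x @ rev x) ` HH k j \<subseteq> MP k j" by (auto simp: MP_def HH_def)
  qed
  moreover have "inj_on (\<lambda>x. x @ rev x) (HH k j)"
    by (rule inj_onI) (auto simp: HH_def)
  ultimately show ?thesis by (simp add: card_image)
qed

lemma HH_sub: "HH k j \<subseteq> {w. length w = j \<and> set w \<subseteq> {..<k}}"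
  by (auto simp: HH_def)

lemma HH_le: "card (HH k j) \<le> k ^ j"
  using card_mono[OF finite_len HH_sub] card_len by metis


lemma len2: "2 \<le> length x \<Longrightarrow> \<exists>a b r. x = a # b # r"
  by (cases x; cases "tl x") auto

lemma HH_upper:
  assumes j: "2 \<le> j"
  shows "card (HH k j) \<le> k ^ j - k ^ (j - 1)"
proof -
  let ?W = "\<lambda>n. {w :: nat list. length w = n \<and> set w \<subseteq> {..<k}}"
  define D where "D = {x \<in> ?W j. x ! 0 = x ! 1}"
  have DW: "D \<subseteq> ?W j" using D_def by auto
  have Dimg: "D = (\<lambda>y. hd y # y) ` ?W (j - 1)"
  proof
    show "D \<subseteq> (\<lambda>y. hd y # y) ` ?W (j - 1)"
    proof
      fix x assume x: "x \<in> D"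
      have "2 \<le> length x" using x j D_def by simp
      then obtain a b r where abr: "x = a # b # r" using len2 by blast
      hence "a = b" using x D_def by simp
      thus "x \<in> (\<lambda>y. hd y # y) ` ?W (j - 1)" using x abr D_def
        by (intro image_eqI[of _ _ "b # r"]) auto
    qed
  next
    show "(\<lambda>y. hd y # y) ` ?W (j - 1) \<subseteq> D"
    proof clarify
      fix y :: "nat list" assume y: "length y = j - 1" "set y \<subseteq> {..<k}"
      then obtain a r where "y = a # r" using j by (cases y) auto
      thus "hd y # y \<in> D" using y j D_def by auto
    qed
  qed
  have "inj_on (\<lambda>y. hd y # y) (?W (j - 1))" by (rule inj_onI) simp
  hence cD: "card D = k ^ (j - 1)" using Dimg card_len by (simp add: card_image)
  have "HH k j \<subseteq> ?W j - D"
  proof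
    fix x assume x: "x \<in> HH k j"
    show "x \<in> ?W j - D"
    proof
      show "x \<in> ?W j" using x by (simp add: HH_def)
      show "x \<notin> D"
      proof
        assume "x \<in> D"
        hence x01: "x ! 0 = x ! 1" "2 \<le> length x" using j D_def by auto
        then obtain a b r where "x = a # b # r" using len2 by blast
        hence ar: "x = a # a # r" using x01 by simp
        have eq: "x @ rev x = [a,a] @ (r @ rev x)" using ar by simp
        have ep: "even_pal [a,a]" unfolding even_pal_def by (rule exI[of _ "[a]"]) simp
        have ne: "r @ rev x \<noteq> []" using ar by simp
        have M: "minpal (x @ rev x)" using x by (simp add: HH_def)
        have "x @ rev x = [a,a] @ (r @ rev x) \<and> r @ rev x \<noteq> [] \<longrightarrow> \<not> even_pal [a,a]"
          using M unfolding minpal_def by blast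
        thus False using eq ep ne by blast
      qed
    qed
  qed
  hence "card (HH k j) \<le> card (?W j - D)" by (intro card_mono) (simp_all add: finite_len)
  also have "\<dots> = k ^ j - k ^ (j - 1)" using card_Diff_subset[OF finite_subset[OF DW finite_len] DW] cD card_len by simp
  finally show ?thesis .
qed


definition cc :: "nat \<Rightarrow> nat \<Rightarrow> nat" where
  "cc k j = (\<Sum>i\<in>{1..j div 2}. k ^ (j - i))"

lemma HH_lower:
  assumes j: "1 \<le> j"
  shows "k ^ j \<le> card (HH k j) + cc k j"
proof -
  let ?W = "\<lambda>n. {w :: nat list. length w = n \<and> set w \<subseteq> {..<k}}"
  let ?g = "\<lambda>i y. take i y @ rev (take i y) @ drop i (y :: nat list)"
  have sub: "?W j - HH k j \<subseteq> (\<Union>i\<in>{1..j div 2}. ?g i ` ?W (j - i))"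
  proof
    fix x assume x: "x \<in> ?W j - HH k j"
    have lx: "length x = j" "set x \<subseteq> {..<k}" using x by auto
    have nm: "\<not> minpal (x @ rev x)" using x HH_def by auto
    have xne: "x \<noteq> []" using lx j by auto
    have ep: "even_pal (x @ rev x)" using xne even_pal_def by blast
    obtain u z where uz: "x @ rev x = u @ z" "minpal u" using decomp[OF ep] by blast
    have zne: "z \<noteq> []" using uz nm by auto
    have "length u \<le> length z" using half[OF ep uz(2) uz(1) zne] .
    moreover have "length u + length z = 2 * j"
      using arg_cong[OF uz(1), of length] lx by simp
    ultimately have lu: "length u \<le> j" by linarith
    obtain w where w: "u = w @ rev w" "w \<noteq> []" using uz minpal_def even_pal_def by blast
    define i where "i = length w"
    have i: "1 \<le> i" "2 * i \<le> j" using w lu i_def by (auto simp: Suc_le_eq)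
    have "take (2*i) (x @ rev x) = u" using uz(1) w i_def by simp
    hence tx: "take (2*i) x = w @ rev w" using i lx w by simp
    define y where "y = w @ drop (2*i) x"
    have X: "x = take (2*i) x @ drop (2*i) x" by (rule append_take_drop_id[symmetric])
    have "x = (w @ rev w) @ drop (2*i) x" using X unfolding tx .
    hence "x = ?g i y" using y_def i_def by simp
    moreover have "y \<in> ?W (j - i)"
    proof -
      have "set w \<subseteq> set (take (2*i) x)" using tx by simp
      hence "set w \<subseteq> set x" by (meson set_take_subset subset_trans)
      moreover have "set (drop (2*i) x) \<subseteq> set x" by (rule set_drop_subset)
      ultimately show ?thesis using lx y_def i_def i by auto
    qed
    moreover have "i \<in> {1..j div 2}" using i by auto
    ultimately show "x \<in> (\<Union>i\<in>{1..j div 2}. ?g i ` ?W (j - i))" by blast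
  qed
  have "card (?W j - HH k j) \<le> card (\<Union>i\<in>{1..j div 2}. ?g i ` ?W (j - i))"
    by (rule card_mono[OF _ sub]) (simp add: finite_len)
  also have "\<dots> \<le> (\<Sum>i\<in>{1..j div 2}. card (?g i ` ?W (j - i)))" by (rule card_UN_le) simp
  also have "\<dots> \<le> (\<Sum>i\<in>{1..j div 2}. k ^ (j - i))"
  proof (rule sum_mono)
    fix i show "card (?g i ` ?W (j - i)) \<le> k ^ (j - i)"
      using card_image_le[OF finite_len, of "?g i" "j - i" k] card_len[of "j - i" k] by simp
  qed
  finally have "card (?W j - HH k j) \<le> cc k j" unfolding cc_def .
  moreover have "card (?W j - HH k j) = k ^ j - card (HH k j)"
    using card_Diff_subset[OF finite_subset[OF HH_sub finite_len] HH_sub] card_len by simp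
  ultimately show ?thesis by simp
qed

lemma cc_rec: "cc k (Suc (Suc j)) = k ^ (j + 1) + k * cc k j"
proof -
  have "cc k (Suc (Suc j)) = (\<Sum>i\<in>{1..Suc (j div 2)}. k ^ (j + 2 - i))" unfolding cc_def by simp
  also have "\<dots> = k ^ (j + 1) + (\<Sum>i\<in>{Suc 1..Suc (j div 2)}. k ^ (j + 2 - i))"
    by (subst sum.atLeast_Suc_atMost) auto
  also have "(\<Sum>i\<in>{Suc 1..Suc (j div 2)}. k ^ (j + 2 - i)) = (\<Sum>i\<in>{1..j div 2}. k ^ (j + 1 - i))"
    by (simp only: sum.shift_bounds_cl_Suc_ivl) simp
  also have "\<dots> = (\<Sum>i\<in>{1..j div 2}. k * k ^ (j - i))"
  proof (rule sum.cong)
    fix i assume "i \<in> {1..j div 2}"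
    hence "i \<le> j" by auto
    hence "j + 1 - i = Suc (j - i)" by simp
    thus "k ^ (j + 1 - i) = k * k ^ (j - i)" by simp
  qed simp
  also have "\<dots> = k * cc k j" unfolding cc_def by (simp add: sum_distrib_left)
  finally show ?thesis .
qed

lemma cc_0: "cc k 0 = 0" and cc_1: "cc k 1 = 0" unfolding cc_def by auto



lemma ren_upper:
  fixes u \<phi> :: "nat \<Rightarrow> real"
  assumes u0: "u 0 \<le> 1" and rec: "\<And>n. 1 \<le> n \<Longrightarrow> u n = (\<Sum>j\<in>{1..n}. \<phi> j * u (n-j))"
    and ph: "\<And>j. 0 \<le> \<phi> j" and ps: "\<And>n. (\<Sum>j\<in>{1..n}. \<phi> j) \<le> 1" and upos: "\<And>n. 0 \<le> u n"
  shows "u n \<le> 1"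
proof (induction n rule: less_induct)
  case (less n)
  show ?case
  proof (cases "n = 0")
    case True thus ?thesis using u0 by simp
  next
    case False
    hence "u n = (\<Sum>j\<in>{1..n}. \<phi> j * u (n-j))" using rec by simp
    also have "\<dots> \<le> (\<Sum>j\<in>{1..n}. \<phi> j * 1)"
    proof (rule sum_mono)
      fix j assume "j \<in> {1..n}"
      hence "u (n - j) \<le> 1" using less by simp
      thus "\<phi> j * u (n - j) \<le> \<phi> j * 1" using mult_left_mono ph by blast
    qed
    also have "\<dots> \<le> 1" using ps by simp
    finally show ?thesis .
  qed
qed

lemma ren_lower:
  fixes u \<phi> :: "nat \<Rightarrow> real" and r :: real
  assumes r: "0 \<le> r" "r < 1" and upos: "\<And>n. 0 < u n"
    and rec: "\<And>n. 1 \<le> n \<Longrightarrow> u n = (\<Sum>j\<in>{1..n}. \<phi> j * u (n-j))"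
    and ph: "\<And>j. 0 \<le> \<phi> j" and ps: "\<And>n. 1 - r^(n+1)/(1-r) \<le> (\<Sum>j\<in>{1..n}. \<phi> j)"
  shows "\<exists>c>0. \<forall>n. c \<le> u n"
proof -
  define mm where "mm n = Min (u ` {..n})" for n
  have mm_le: "mm n \<le> u i" if "i \<le> n" for i n using that unfolding mm_def by (intro Min_le) auto
  have mm_pos: "0 < mm n" for n
  proof -
    have "mm n \<in> u ` {..n}" unfolding mm_def by (intro Min_in) auto
    thus ?thesis using upos by auto
  qed
  have mm_Suc: "mm (Suc n) = min (mm n) (u (Suc n))" for n
  proof -
    have "{..Suc n} = insert (Suc n) {..n}" by auto
    hence "u ` {..Suc n} = insert (u (Suc n)) (u ` {..n})" by auto
    thus ?thesis unfolding mm_def by (simp add: Min_insert min.commute)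
  qed
  define E where "E n = r^(n+1)/(1-r)" for n
  have E0: "0 \<le> E n" for n using r unfolding E_def by simp
  have step: "(1 - E (Suc n)) * mm n \<le> mm (Suc n)" for n
  proof -
    have "u (Suc n) = (\<Sum>j\<in>{1..Suc n}. \<phi> j * u (Suc n - j))" using rec by simp
    also have "\<dots> \<ge> (\<Sum>j\<in>{1..Suc n}. \<phi> j * mm n)"
    proof (rule sum_mono)
      fix j assume "j \<in> {1..Suc n}"
      hence "mm n \<le> u (Suc n - j)" by (intro mm_le) auto
      thus "\<phi> j * mm n \<le> \<phi> j * u (Suc n - j)" using mult_left_mono ph by blast
    qed
    finally have "(\<Sum>j\<in>{1..Suc n}. \<phi> j) * mm n \<le> u (Suc n)" by (simp only: sum_distrib_right)
    moreover have "(1 - E (Suc n)) * mm n \<le> (\<Sum>j\<in>{1..Suc n}. \<phi> j) * mm n"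
      using ps[of "Suc n"] mm_pos[of n] unfolding E_def by (intro mult_right_mono) auto
    moreover have "(1 - E (Suc n)) * mm n \<le> mm n" using E0 mm_pos[of n] by (simp add: mult_le_cancel_right1)
    ultimately show ?thesis unfolding mm_Suc by simp
  qed
  have "((1-r)^2/2) > 0" using r by simp
  then obtain N where N: "r ^ N < (1-r)^2/2" using real_arch_pow_inv[of "(1-r)^2/2" r] r by blast
  have rN: "r ^ (N+2) \<le> r ^ N" using r by (intro power_decreasing) auto
  define M where "M = mm N"
  have M0: "0 < M" using mm_pos M_def by simp
  define A where "A d = (r^(N+2) - r^(N+d+2))/(1-r)^2" for d
  have Aeq: "A (Suc d) = A d + E (N + d + 1)" for d
  proof -
    have r1: "1 - r \<noteq> 0" using r by simp
    have aux: "(a - q*r)/(1-r)^2 = (a - q)/(1-r)^2 + q/(1-r)" for a q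
    proof -
      have "q/(1-r) = q*(1-r)/(1-r)^2" using r1 by (simp add: power2_eq_square)
      hence "(a - q)/(1-r)^2 + q/(1-r) = ((a - q) + q*(1-r))/(1-r)^2" by (simp add: add_divide_distrib)
      also have "(a - q) + q*(1-r) = a - q*r" by (simp add: algebra_simps)
      finally show ?thesis by simp
    qed
    have i1: "N + Suc d + 2 = Suc (N+d+2)" by simp
    have e1: "A (Suc d) = (r^(N+2) - r^(N+d+2)*r)/(1-r)^2" unfolding A_def i1 power_Suc2 ..
    have i2: "N + d + 1 + 1 = N+d+2" by simp
    have e2: "E (N + d + 1) = r^(N+d+2)/(1-r)" unfolding E_def i2 ..
    have e3: "A d = (r^(N+2) - r^(N+d+2))/(1-r)^2" unfolding A_def ..
    show ?thesis by (simp only: e1 e2 e3 aux)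
  qed
  have A0: "0 \<le> A d" for d
  proof -
    have "r^(N+d+2) \<le> r^(N+2)" using r by (intro power_decreasing) auto
    thus ?thesis unfolding A_def by simp
  qed
  have Ab: "A d \<le> 1/2" for d
  proof -
    have "A d \<le> r^(N+2)/(1-r)^2" unfolding A_def using r by (intro divide_right_mono) auto
    also have "\<dots> \<le> 1/2" using N rN r by (simp add: field_simps)
    finally show ?thesis .
  qed
  have Eb: "E (N + d + 1) \<le> 1" for d
  proof -
    have "E (N + d + 1) = A (Suc d) - A d" using Aeq by simp
    thus ?thesis using A0[of d] Ab[of "Suc d"] by simp
  qed
  have claim: "M * (1 - A d) \<le> mm (N + d)" for d
  proof (induction d)
    case 0 thus ?case unfolding A_def M_def by simp
  next
    case (Suc d)
    let ?e = "E (N + d + 1)"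
    have e0: "0 \<le> ?e" "?e \<le> 1" using E0 Eb by auto
    have "M * (1 - A (Suc d)) = M * (1 - A d - ?e)" using Aeq by simp
    also have "\<dots> \<le> (1 - ?e) * (M * (1 - A d))"
    proof -
      have "0 \<le> M * ?e * A d" using M0 e0 A0 by simp
      thus ?thesis by (simp add: algebra_simps)
    qed
    also have "\<dots> \<le> (1 - ?e) * mm (N + d)" using Suc e0 by (intro mult_left_mono) auto
    also have "\<dots> \<le> mm (N + Suc d)" using step[of "N + d"] by simp
    finally show ?case .
  qed
  have "M / 2 \<le> u n" for n
  proof (cases "n \<le> N")
    case True
    hence "M \<le> u n" unfolding M_def by (rule mm_le)
    thus ?thesis using M0 by simp
  next
    case False
    then obtain d where d: "n = N + d" by (metis le_add_diff_inverse nat_le_linear)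
    have "M / 2 \<le> M * (1 - A d)" using Ab[of d] M0 by (simp add: field_simps)
    also have "\<dots> \<le> mm n" using claim d by simp
    also have "\<dots> \<le> u n" by (rule mm_le) simp
    finally show ?thesis .
  qed
  thus ?thesis using M0 by (intro exI[of _ "M/2"]) auto
qed



locale ser =
  fixes f c :: "nat \<Rightarrow> real" and k :: real
  assumes k2: "2 \<le> k"
    and f0: "f 0 = 0" and fnn: "\<And>j. 0 \<le> f j" and fle: "\<And>j. f j \<le> k ^ j"
    and fup: "\<And>n. f (n+2) \<le> k^(n+2) - k^(n+1)"
    and flow: "\<And>j. 1 \<le> j \<Longrightarrow> k^j - c j \<le> f j"
    and c0: "c 0 = 0" and c1: "c 1 = 0" and cS: "\<And>j. c (Suc (Suc j)) = k^(j+1) + k * c j"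
begin

lemma c_bound: "0 \<le> c j \<and> c j \<le> k ^ j"
proof -
  have "(0 \<le> c j \<and> c j \<le> k ^ j) \<and> (0 \<le> c (Suc j) \<and> c (Suc j) \<le> k ^ Suc j)"
  proof (induction j)
    case 0 thus ?case using c0 c1 k2 by simp
  next
    case (Suc j)
    have "k * c j \<le> k * k^j" using Suc k2 by (intro mult_left_mono) auto
    moreover have "k^(j+1) + k^(j+1) \<le> k * k^(j+1)" using k2 by (simp add: mult_right_mono)
    moreover have "0 \<le> k * c j" using Suc k2 by simp
    ultimately show ?case using Suc cS[of j] by simp
  qed
  thus ?thesis by blast
qed

lemma geo: assumes "0 \<le> s" "k*s < 1" shows "summable (\<lambda>n. (k*s)^n)" "(\<Sum>n. (k*s)^n) = 1/(1-k*s)"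
proof -
  have "norm (k*s) < 1" using assms k2 by simp
  thus "summable (\<lambda>n. (k*s)^n)" "(\<Sum>n. (k*s)^n) = 1/(1-k*s)"
    using geometric_sums sums_unique summable_geometric by metis+
qed

lemma G_summable: assumes "0 \<le> s" "k*s < 1" shows "summable (\<lambda>n. f n * s^n)"
proof (rule summable_comparison_test[OF _ geo(1)[OF assms]])
  show "\<exists>N. \<forall>n\<ge>N. norm (f n * s ^ n) \<le> (k * s) ^ n"
    using fnn fle assms by (auto simp: power_mult_distrib intro!: mult_right_mono)
qed

lemma C_summable: assumes "0 \<le> s" "k*s < 1" shows "summable (\<lambda>n. c n * s^n)"
proof (rule summable_comparison_test[OF _ geo(1)[OF assms]])
  show "\<exists>N. \<forall>n\<ge>N. norm (c n * s ^ n) \<le> (k * s) ^ n"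
    using c_bound assms by (auto simp: power_mult_distrib intro!: mult_right_mono)
qed

lemma G_up: assumes s: "0 \<le> s" "k*s < 1"
  shows "(\<Sum>n. f n * s^n) \<le> k*s + (k-1)*k*s^2/(1-k*s)"
proof -
  have S: "summable (\<lambda>n. f n * s^n)" by (rule G_summable[OF s])
  have "(\<Sum>n. f n * s^n) = (\<Sum>n. f (n+2) * s^(n+2)) + (\<Sum>n<2. f n * s^n)"
    using suminf_split_initial_segment[OF S, of 2] by simp
  also have "(\<Sum>n<2. f n * s^n) = f 1 * s" using f0 by (simp add: numeral_2_eq_2)
  also have "(\<Sum>n. f (n+2) * s^(n+2)) \<le> (\<Sum>n. (k-1)*k*s^2 * (k*s)^n)"
  proof (rule suminf_le)
    fix n
    have "f (n+2) \<le> (k-1)*k*k^n" using fup[of n] by (simp add: algebra_simps)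
    hence "f (n+2) * s^(n+2) \<le> (k-1)*k*k^n * s^(n+2)" using s by (intro mult_right_mono) auto
    also have "(k-1)*k*k^n * s^(n+2) = (k-1)*k*s^2 * (k*s)^n" by (simp add: power_add power_mult_distrib power2_eq_square algebra_simps)
    finally show "f (n+2) * s^(n+2) \<le> (k-1)*k*s^2 * (k*s)^n" .
    show "summable (\<lambda>n. f (n+2) * s^(n+2))" using S by (subst summable_iff_shift) 
    show "summable (\<lambda>n. (k-1)*k*s^2 * (k*s)^n)" using geo(1)[OF s] by (rule summable_mult)
  qed
  also have "(\<Sum>n. (k-1)*k*s^2 * (k*s)^n) = (k-1)*k*s^2/(1-k*s)"
    using suminf_mult[OF geo(1)[OF s], of "(k-1)*k*s^2"] geo(2)[OF s] by simp
  finally have "(\<Sum>n. f n * s^n) \<le> (k-1)*k*s^2/(1-k*s) + f 1 * s" by simp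
  moreover have "f 1 * s \<le> k * s" using fle[of 1] s by (intro mult_right_mono) auto
  ultimately show ?thesis by linarith
qed

lemma C_val: assumes s: "0 \<le> s" "k*s < 1"
  shows "(\<Sum>n. c n * s^n) = k*s^2/((1-k*s)*(1-k*s^2))"
proof -
  have S: "summable (\<lambda>n. c n * s^n)" by (rule C_summable[OF s])
  define C where "C = (\<Sum>n. c n * s^n)"
  have E: "(\<lambda>n. c (n+2) * s^(n+2)) = (\<lambda>n. k*s^2 * (k*s)^n + k*s^2 * (c n * s^n))"
  proof
    fix n
    have "c (n+2) = k^(n+1) + k * c n" using cS[of n] by (simp add: numeral_2_eq_2)
    thus "c (n+2) * s^(n+2) = k*s^2 * (k*s)^n + k*s^2 * (c n * s^n)"
      by (simp add: power_add power_mult_distrib power2_eq_square algebra_simps)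
  qed
  have "C = (\<Sum>n. c (n+2) * s^(n+2)) + (\<Sum>n<2. c n * s^n)"
    unfolding C_def using suminf_split_initial_segment[OF S, of 2] by simp
  also have "(\<Sum>n<2. c n * s^n) = 0" using c0 c1 by (simp add: numeral_2_eq_2)
  also have "(\<Sum>n. c (n+2) * s^(n+2)) = (\<Sum>n. k*s^2 * (k*s)^n + k*s^2 * (c n * s^n))"
    unfolding E ..
  also have "\<dots> = k*s^2 * (\<Sum>n. (k*s)^n) + k*s^2 * C"
    unfolding C_def
    using suminf_add[OF summable_mult[OF geo(1)[OF s]] summable_mult[OF S]]
      suminf_mult[OF geo(1)[OF s]] suminf_mult[OF S] by simp
  finally have "C = k*s^2/(1-k*s) + k*s^2*C" using geo(2)[OF s] by simp
  hence eqC: "C * (1 - k*s^2) = k*s^2/(1-k*s)" by (simp add: algebra_simps)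
  have nz: "1 - k*s^2 \<noteq> 0"
  proof -
    have "1*s \<le> k*s" using s k2 by (intro mult_right_mono) auto
    hence s1: "s \<le> 1" using s by linarith
    have "s*s \<le> s*1" using s s1 by (intro mult_left_mono) auto
    hence "k*(s*s) \<le> k*s" using k2 by (intro mult_left_mono) auto
    hence "k*s^2 \<le> k*s" by (simp add: power2_eq_square)
    thus ?thesis using s by simp
  qed
  have "C = (k*s^2/(1-k*s))/(1-k*s^2)" using nonzero_eq_divide_eq[OF nz] eqC by blast
  thus ?thesis unfolding C_def by (simp add: divide_divide_eq_left)
qed

lemma G_low: assumes s: "0 \<le> s" "k*s < 1"
  shows "k*s/(1-k*s) - k*s^2/((1-k*s)*(1-k*s^2)) \<le> (\<Sum>n. f n * s^n)"
proof -
  have S: "summable (\<lambda>n. f n * s^n)" by (rule G_summable[OF s])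
  have SC: "summable (\<lambda>n. c n * s^n)" by (rule C_summable[OF s])
  have SG: "summable (\<lambda>n. (k*s)^n)" by (rule geo(1)[OF s])
  have SA: "summable (\<lambda>n. (k*s)^(n+1))" using summable_iff_shift[of "\<lambda>n. (k*s)^n" 1] SG by simp
  have SB: "summable (\<lambda>n. c (n+1) * s^(n+1))" using summable_iff_shift[of "\<lambda>n. c n * s^n" 1] SC by simp
  have SF: "summable (\<lambda>n. f (n+1) * s^(n+1))" using summable_iff_shift[of "\<lambda>n. f n * s^n" 1] S by simp
  have e1: "(\<Sum>n. f n * s^n) = (\<Sum>n. f (n+1) * s^(n+1))"
    using suminf_split_initial_segment[OF S, of 1] f0 by simp
  have e2: "(\<Sum>n. c n * s^n) = (\<Sum>n. c (n+1) * s^(n+1))"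
    using suminf_split_initial_segment[OF SC, of 1] c0 by simp
  have "(\<Sum>n. (k*s)^n) = (\<Sum>n. (k*s)^(n+1)) + 1"
    using suminf_split_initial_segment[OF SG, of 1] by simp
  hence e3: "(\<Sum>n. (k*s)^(n+1)) = 1/(1-k*s) - 1" using geo(2)[OF s] by simp
  have "1/(1-k*s) - 1 = k*s/(1-k*s)" using s by (simp add: field_simps)
  note e3 = e3[unfolded this]
  have "(\<Sum>n. (k*s)^(n+1) - c (n+1) * s^(n+1)) \<le> (\<Sum>n. f (n+1) * s^(n+1))"
  proof (rule suminf_le)
    fix n
    have "k^(n+1) - c (n+1) \<le> f (n+1)" using flow[of "n+1"] by simp
    hence "(k^(n+1) - c (n+1)) * s^(n+1) \<le> f (n+1) * s^(n+1)" using s by (intro mult_right_mono) auto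
    thus "(k*s)^(n+1) - c (n+1) * s^(n+1) \<le> f (n+1) * s^(n+1)" by (simp only: power_mult_distrib left_diff_distrib)
    show "summable (\<lambda>n. f (n+1) * s^(n+1))" by (rule SF)
    show "summable (\<lambda>n. (k*s)^(n+1) - c (n+1) * s^(n+1))" by (rule summable_diff[OF SA SB])
  qed
  moreover have "(\<Sum>n. (k*s)^(n+1) - c (n+1) * s^(n+1)) = (\<Sum>n. (k*s)^(n+1)) - (\<Sum>n. c (n+1) * s^(n+1))"
    using suminf_diff[OF SA SB] by simp
  ultimately show ?thesis using C_val[OF s] e1 e2 e3 by simp
qed

end

lemma N1: fixes k :: real assumes k: "2 \<le> k"
  shows "k * (1/(2*k-1/2)) + (k-1)*k*(1/(2*k-1/2))^2/(1-k*(1/(2*k-1/2))) < 1"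
proof -
  define D where "D = 2*k - 1/2"
  have D: "0 < D" "0 < D - k" using k D_def by auto
  have "1 - k*(1/D) = (D-k)/D" using D by (simp add: field_simps)
  hence "k * (1/D) + (k-1)*k*(1/D)^2/(1-k*(1/D)) = k/D + (k-1)*k/(D*(D-k))"
    using D by (simp add: field_simps power2_eq_square)
  also have "\<dots> = (k*(D-k) + (k-1)*k)/(D*(D-k))" using D by (simp add: field_simps)
  also have "\<dots> < 1"
  proof -
    have "k*(D-k) + (k-1)*k < D*(D-k)" unfolding D_def by (simp add: algebra_simps)
    thus ?thesis using D by simp
  qed
  finally show ?thesis unfolding D_def .
qed

lemma N2: fixes k :: real assumes k: "2 \<le> k"
  shows "1 < k*(1/(2*k-1))/(1-k*(1/(2*k-1))) - k*(1/(2*k-1))^2/((1-k*(1/(2*k-1)))*(1-k*(1/(2*k-1))^2))"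
proof -
  define D where "D = 2*k - 1"
  have D: "0 < D" "D - k = k - 1" "0 < k - 1" using k D_def by auto
  have Qe: "D*D - k = (4*k-1)*(k-1)" unfolding D_def by (simp add: algebra_simps)
  have Q: "0 < D*D - k" unfolding Qe using k by (intro mult_pos_pos) auto
  have a: "1 - k*(1/D) = (k-1)/D" using D by (simp add: field_simps)
  have b: "1 - k*(1/D)^2 = (D*D - k)/(D*D)" using D by (simp add: field_simps power2_eq_square)
  have e1: "k*(1/D)/(1-k*(1/D)) = k/(k-1)" unfolding a using D by (simp add: field_simps)
  have e2: "k*(1/D)^2/((1-k*(1/D))*(1-k*(1/D)^2)) = k*D/((k-1)*(D*D-k))"
    unfolding a b using D Q by (simp add: field_simps power2_eq_square)
  have e3: "1 < k/(k-1) - k*D/((k-1)*(D*D-k))"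
  proof -
    have "k/(k-1) = k*(D*D-k)/((k-1)*(D*D-k))" using Q by simp
    hence "k/(k-1) - k*D/((k-1)*(D*D-k)) = (k*(D*D-k) - k*D)/((k-1)*(D*D-k))"
      by (simp add: diff_divide_distrib)
    also have "k*(D*D-k) - k*D = k*(D*D - k - D)" by (simp add: algebra_simps)
    finally have "k/(k-1) - k*D/((k-1)*(D*D-k)) = k*(D*D - k - D)/((k-1)*(D*D-k))" .
    moreover have "(k-1)*(D*D-k) < k*(D*D - k - D)"
    proof -
      have "k*(D*D - k - D) - (k-1)*(D*D-k) = 2*k*k - 4*k + 1" unfolding D_def by (simp add: algebra_simps)
      moreover have "0 \<le> k*(k-2)" using k by simp
      ultimately show ?thesis by (simp add: algebra_simps)
    qed
    ultimately show ?thesis using D Q by simp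
  qed
  show ?thesis unfolding D_def[symmetric] e1 e2 by (rule e3)
qed

theorem theorem3:
  fixes k :: nat
  assumes "k \<ge> 2"
  shows "\<exists>\<alpha>::real. 2 * real k - 1 < \<alpha> \<and> \<alpha> < 2 * real k - 1/2 \<and>
           (\<lambda>n. real (palstar_count k n)) \<in> \<Theta>(\<lambda>n. \<alpha> ^ n)"
proof -
  have k0: "0 < k" using assms by simp
  have kr: "2 \<le> real k" using assms by simp
  define f where "f j = real (card (HH k j))" for j
  define c where "c j = real (cc k j)" for j
  have HH0: "HH k 0 = {}" by (auto simp: HH_def minpal_def even_pal_def)
  interpret S: ser f c "real k"
  proof
    show "2 \<le> real k" by (rule kr)
    show "f 0 = 0" unfolding f_def HH0 by simp
    show "\<And>j. 0 \<le> f j" unfolding f_def by simp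
    show "\<And>j. f j \<le> real k ^ j" unfolding f_def by (metis HH_le of_nat_le_iff of_nat_power)
    show "\<And>n. f (n+2) \<le> real k^(n+2) - real k^(n+1)"
    proof -
      fix n
      have "card (HH k (n+2)) \<le> k^(n+2) - k^(n+2-1)" by (rule HH_upper) simp
      moreover have "k^(n+1) \<le> k^(n+2)" using k0 by (intro power_increasing) auto
      ultimately have "real (card (HH k (n+2))) \<le> real (k^(n+2) - k^(n+1))"
        by (simp only: of_nat_le_iff diff_add_inverse2 add_diff_cancel_left') simp
      also have "\<dots> = real (k^(n+2)) - real (k^(n+1))" using \<open>k^(n+1) \<le> k^(n+2)\<close> by (rule of_nat_diff)
      finally have "real (card (HH k (n+2))) \<le> real (k^(n+2)) - real (k^(n+1))" .
      thus "f (n+2) \<le> real k^(n+2) - real k^(n+1)" unfolding f_def by simp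
    qed
    show "\<And>j. 1 \<le> j \<Longrightarrow> real k^j - c j \<le> f j"
    proof -
      fix j :: nat assume "1 \<le> j"
      hence "k ^ j \<le> card (HH k j) + cc k j" by (rule HH_lower)
      hence "real (k ^ j) \<le> real (card (HH k j)) + real (cc k j)" by linarith
      thus "real k^j - c j \<le> f j" unfolding f_def c_def by simp
    qed
    show "c 0 = 0" "c 1 = 0" unfolding c_def using cc_0 cc_1 by auto
    show "\<And>j. c (Suc (Suc j)) = real k^(j+1) + real k * c j"
      unfolding c_def cc_rec by simp
  qed
  define G where "G s = (\<Sum>n. f n * s^n)" for s
  define s1 where "s1 = 1/(2*real k - 1/2)"
  define s2 where "s2 = 1/(2*real k - 1)"
  have s1p: "0 < s1" using kr unfolding s1_def by simp
  have s12: "s1 < s2" using kr unfolding s1_def s2_def by (simp add: field_simps)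
  have ks2: "real k * s2 < 1" using kr unfolding s2_def by (simp add: field_simps)
  have ks1: "real k * s1 < 1" using ks2 s12 k0 by (smt (verit) mult_strict_left_mono of_nat_0_less_iff)
  have G1: "G s1 < 1"
    using S.G_up[of s1] s1p ks1 N1[OF kr] unfolding G_def s1_def by linarith
  have G2: "1 < G s2"
    using S.G_low[of s2] s1p s12 ks2 N2[OF kr] unfolding G_def s2_def by linarith
  define K where "K = 1/(real k + 1/2)"
  have K: "0 \<le> K" "real k * K < 1" "s2 < K" using kr unfolding K_def s2_def by (simp_all add: field_simps)
  have sumK: "summable (\<lambda>n. f n * K^n)" by (rule S.G_summable[OF K(1,2)])
  have cont: "continuous_on {s1..s2} G"
  proof (rule continuous_at_imp_continuous_on, rule ballI)
    fix x assume "x \<in> {s1..s2}"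
    hence "norm x < norm K" using s1p K by auto
    thus "isCont G x" unfolding G_def by (rule isCont_powser[OF sumK])
  qed
  obtain s0 where s0: "s1 \<le> s0" "s0 \<le> s2" "G s0 = 1"
    using IVT'[of G s1 1 s2] G1 G2 s12 cont by auto
  have s0': "s1 < s0" "s0 < s2" using s0 G1 G2 by (auto simp: order.order_iff_strict)
  have s0p: "0 < s0" using s0' s1p by simp
  define \<alpha> where "\<alpha> = 1/s0"
  have al1: "2 * real k - 1 < \<alpha>"
  proof -
    have "s0 * (2 * real k - 1) < 1" using s0'(2) kr unfolding s2_def by (simp add: field_simps)
    thus ?thesis unfolding \<alpha>_def using s0p by (simp add: field_simps)
  qed
  have al2: "\<alpha> < 2 * real k - 1/2"
  proof -
    have "1 < s0 * (2 * real k - 1/2)" using s0'(1) kr unfolding s1_def by (simp add: field_simps)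
    thus ?thesis unfolding \<alpha>_def using s0p by (simp add: field_simps)
  qed
  define r where "r = real k * s0"
  have r: "0 \<le> r" "r < 1" using s0p s0' ks2 k0 unfolding r_def
    by (simp, smt (verit) mult_strict_left_mono of_nat_0_less_iff)
  have ks0: "0 \<le> s0" "real k * s0 < 1" using r s0p unfolding r_def by auto
  define t where "t n = real (palstar_count k n)" for n
  define u where "u n = t n * s0^n" for n
  define \<phi> where "\<phi> j = f j * s0^j" for j
  have Sphi: "summable \<phi>" unfolding \<phi>_def by (rule S.G_summable[OF ks0])
  have sphi1: "suminf \<phi> = 1" using s0(3) unfolding G_def \<phi>_def by simp
  have phi0: "\<phi> 0 = 0" unfolding \<phi>_def using S.f0 by simp
  have phinn: "\<And>j. 0 \<le> \<phi> j" unfolding \<phi>_def using S.fnn s0p by simp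
  have tpos: "1 \<le> t n" for n unfolding t_def palstar_count_PS using PS_pos[OF k0, of n] by simp
  have upos: "0 < u n" for n unfolding u_def using tpos[of n] s0p by (simp add: zero_less_mult_iff)
  have rec: "u n = (\<Sum>j\<in>{1..n}. \<phi> j * u (n-j))" if n: "1 \<le> n" for n
  proof -
    have "t n = (\<Sum>j\<in>{1..n}. f j * t (n-j))"
      unfolding t_def f_def palstar_count_PS renewal[OF n] card_MP by simp
    hence "u n = (\<Sum>j\<in>{1..n}. f j * t (n-j)) * s0^n" unfolding u_def by simp
    also have "\<dots> = (\<Sum>j\<in>{1..n}. \<phi> j * u (n-j))" unfolding sum_distrib_right
    proof (rule sum.cong)
      fix j assume "j \<in> {1..n}"
      hence "s0^n = s0^j * s0^(n-j)" by (simp flip: power_add)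
      thus "f j * t (n - j) * s0 ^ n = \<phi> j * u (n - j)" unfolding \<phi>_def u_def by simp
    qed simp
    finally show ?thesis .
  qed
  have u0: "u 0 \<le> 1"
  proof -
    have "PS k 0 \<subseteq> {[]}" by (auto simp: PS_def)
    hence "card (PS k 0) \<le> card {[]::nat list}" by (intro card_mono) simp_all
    hence "card (PS k 0) \<le> 1" by simp
    thus ?thesis unfolding u_def t_def palstar_count_PS by simp
  qed
  have psum_eq: "(\<Sum>j\<in>{1..n}. \<phi> j) = (\<Sum>j<n+1. \<phi> j)" for n
  proof -
    have "{..<n+1} = insert 0 {1..n}" by auto
    thus ?thesis using phi0 by simp
  qed
  have psup: "(\<Sum>j\<in>{1..n}. \<phi> j) \<le> 1" for n
    unfolding psum_eq sphi1[symmetric] by (rule sum_le_suminf[OF Sphi]) (auto intro: phinn)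
  have pslow: "1 - r^(n+1)/(1-r) \<le> (\<Sum>j\<in>{1..n}. \<phi> j)" for n
  proof -
    have sr: "summable (\<lambda>i. r^i)" using r by simp
    have "1 = (\<Sum>i. \<phi> (i + (n+1))) + (\<Sum>j<n+1. \<phi> j)"
      using suminf_split_initial_segment[OF Sphi, of "n+1"] sphi1 by simp
    moreover have "(\<Sum>i. \<phi> (i + (n+1))) \<le> (\<Sum>i. r^(n+1) * r^i)"
    proof (rule suminf_le)
      fix i
      have "\<phi> (i + (n+1)) \<le> real k^(i+(n+1)) * s0^(i+(n+1))"
        unfolding \<phi>_def using S.fle[of "i+(n+1)"] s0p by (intro mult_right_mono) auto
      also have "\<dots> = r^(n+1) * r^i" unfolding r_def by (simp add: power_mult_distrib power_add)
      finally show "\<phi> (i + (n+1)) \<le> r^(n+1) * r^i" .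
      show "summable (\<lambda>i. \<phi> (i + (n+1)))" using Sphi by (subst summable_iff_shift)
      show "summable (\<lambda>i. r^(n+1) * r^i)" using sr by (rule summable_mult)
    qed
    moreover have "(\<Sum>i. r^(n+1) * r^i) = r^(n+1)/(1-r)"
      using suminf_mult[OF sr, of "r^(n+1)"] suminf_geometric[of r] r by simp
    ultimately show ?thesis unfolding psum_eq by linarith
  qed
  have uup: "u n \<le> 1" for n
    by (rule ren_upper[of u \<phi>]) (use u0 rec phinn psup upos in \<open>auto intro: less_imp_le\<close>)
  obtain cc0 where cc0: "cc0 > 0" "\<And>n. cc0 \<le> u n"
    using ren_lower[of r u \<phi>, OF r upos rec phinn pslow] by blast
  have tu: "t n = u n * \<alpha>^n" for n
  proof -
    have "s0^n * \<alpha>^n = 1" unfolding \<alpha>_def using s0p by (simp add: power_one_over[symmetric] flip: power_mult_distrib)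
    thus ?thesis unfolding u_def by (metis mult.assoc mult.right_neutral)
  qed
  have alp: "0 < \<alpha>" unfolding \<alpha>_def using s0p by simp
  have "(\<lambda>n. real (palstar_count k n)) \<in> \<Theta>(\<lambda>n. \<alpha> ^ n)"
  proof (rule bigthetaI'[of cc0 1])
    show "cc0 > 0" "(1::real) > 0" using cc0 by auto
    show "\<forall>\<^sub>F n in at_top. cc0 * norm (\<alpha>^n) \<le> norm (real (palstar_count k n)) \<and>
            norm (real (palstar_count k n)) \<le> 1 * norm (\<alpha>^n)"
    proof (rule always_eventually, rule allI)
      fix n
      have ap: "0 < \<alpha>^n" using alp by simp
      have "cc0 * \<alpha>^n \<le> u n * \<alpha>^n" using cc0 ap by (intro mult_right_mono) auto
      moreover have "u n * \<alpha>^n \<le> 1 * \<alpha>^n" using uup ap by (intro mult_right_mono) auto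
      ultimately show "cc0 * norm (\<alpha>^n) \<le> norm (real (palstar_count k n)) \<and>
            norm (real (palstar_count k n)) \<le> 1 * norm (\<alpha>^n)"
        using tu[of n] ap unfolding t_def by simp
    qed
  qed
  thus ?thesis using al1 al2 by blast
qed


end
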